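(* Let $q$ be a set of operations on a set $\Omega$. For all $a,b\in\Omega$: $a\sim_q b$ if and only if for every formula $\phi(x,y)$ of $\mathscr L^-_{\infty\infty}(q)$ with exactly two free variables and every $c\in\Omega$, $\Omega,q\models\phi(a,c)\iff\Omega,q\models\phi(b,c)$.
   Context: A set of operations on $\Omega$ is a set of finitary relations on $\Omega$ and quantifiers on $\Omega$ (subsets of $\mathcal P(\Omega^{k_1})\times\cdots\times\mathcal P(\Omega^{k_l})$, $l,k_i$ finite). $\mathscr L^-_{\infty\infty}(q)$ is the equality-free infinitary logic (arbitrary conjunctions/disjunctions, quantification over arbitrary sequences of variables) with a predicate symbol for each relation in $q$ and a generalized (Lindström) quantifier symbol for each quantifier in $q$, interpreted in $\Omega$. $a\sim_q b$ iff for every formula $\phi(x,\bar y)$ of $\mathscr L^-_{\infty\infty}(q)$ and every tuple $\bar c$ from $\Omega$, $\Omega,q\models\phi(a,\bar c)\iff\Omega,q\models\phi(b,\bar c)$. *)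

theory Defs
  imports Main
begin

text \<open>The set \<Omega> is modelled as the universe of the type 'a.
  A set of operations q consists of
  - relations: pairs (k, R) with R a k-ary relation, given as a set of lists of length k;
  - quantifiers: pairs (ks, Q) with ks = [k_1,...,k_l] and
    Q a set of l-tuples (lists) of relations of arities k_1,...,k_l.\<close>

record 'a ops =
  rels :: "(nat \<times> 'a list set) set"
  quants :: "(nat list \<times> 'a list set list set) set"

definition wf_ops :: "'a ops \<Rightarrow> bool" where
  "wf_ops q \<longleftrightarrow>
     (\<forall>(k, R) \<in> rels q. \<forall>as \<in> R. length as = k) \<and>
     (\<forall>(ks, Q) \<in> quants q. \<forall>Rs \<in> Q. length Rs = length ks \<and>
        (\<forall>i < length ks. \<forall>as \<in> Rs ! i. length as = ks ! i))"

definition upds :: "('v \<Rightarrow> 'a) \<Rightarrow> 'v list \<Rightarrow> 'a list \<Rightarrow> ('v \<Rightarrow> 'a)" where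
  "upds s xs as = (\<lambda>v. case map_of (zip xs as) v of None \<Rightarrow> s v | Some a \<Rightarrow> a)"

text \<open>Formulas of the equality-free infinitary logic L^-_{\<infinity>\<infinity>}(q), represented by
  their syntactic set of free variables F together with their meaning
  (the predicate on assignments s :: 'v \<Rightarrow> 'a that they define in \<Omega>, q).
  fml q F P: there is a formula with free variable set F whose truth set is P.\<close>
inductive fml :: "'a ops \<Rightarrow> 'v set \<Rightarrow> (('v \<Rightarrow> 'a) \<Rightarrow> bool) \<Rightarrow> bool" for q where
  atom: "(k, R) \<in> rels q \<Longrightarrow> length vs = k \<Longrightarrow>
         fml q (set vs) (\<lambda>s. map s vs \<in> R)"
| neg: "fml q F P \<Longrightarrow> fml q F (\<lambda>s. \<not> P s)"
| conj: "(\<forall>p \<in> S. fml q (fst p) (snd p)) \<Longrightarrow>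
         fml q (\<Union>(fst ` S)) (\<lambda>s. \<forall>p \<in> S. snd p s)"
| disj: "(\<forall>p \<in> S. fml q (fst p) (snd p)) \<Longrightarrow>
         fml q (\<Union>(fst ` S)) (\<lambda>s. \<exists>p \<in> S. snd p s)"
| ex: "fml q F P \<Longrightarrow>
       fml q (F - X) (\<lambda>s. \<exists>t. (\<forall>v. v \<notin> X \<longrightarrow> t v = s v) \<and> P t)"
| all: "fml q F P \<Longrightarrow>
       fml q (F - X) (\<lambda>s. \<forall>t. (\<forall>v. v \<notin> X \<longrightarrow> t v = s v) \<longrightarrow> P t)"
| gq: "(ks, Q) \<in> quants q \<Longrightarrow> length xs = length ks \<Longrightarrow> length phis = length ks \<Longrightarrow>
       (\<forall>i < length ks. distinct (xs ! i) \<and> length (xs ! i) = ks ! i \<and>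
           fml q (fst (phis ! i)) (snd (phis ! i))) \<Longrightarrow>
       fml q (\<Union>i < length ks. fst (phis ! i) - set (xs ! i))
         (\<lambda>s. map (\<lambda>i. {as. length as = ks ! i \<and> snd (phis ! i) (upds s (xs ! i) as)})
                  [0..<length ks] \<in> Q)"

definition sim_q :: "'a ops \<Rightarrow> 'v itself \<Rightarrow> 'a \<Rightarrow> 'a \<Rightarrow> bool" where
  "sim_q q _ a b \<longleftrightarrow>
     (\<forall>(F :: 'v set) P x s. fml q F P \<longrightarrow> (P (s(x := a)) \<longleftrightarrow> P (s(x := b))))"

end

theory Submission
  imports Defs
begin

lemma fml_cong: "fml q F P \<Longrightarrow> F = F' \<Longrightarrow> P = P' \<Longrightarrow> fml q F' P'"
  by simp

lemma map_of_zip_inj: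
  assumes "inj \<rho>"
  shows "map_of (zip (map \<rho> xs) as) (\<rho> v) = map_of (zip xs as) v"
proof (induction xs arbitrary: as)
  case Nil then show ?case by simp
next
  case (Cons x xs)
  then show ?case using assms by (cases as) (auto dest: injD)
qed

lemma upds_inj:
  assumes "inj \<rho>"
  shows "upds s (map \<rho> xs) as \<circ> \<rho> = upds (s \<circ> \<rho>) xs as"
  unfolding upds_def comp_def by (simp add: map_of_zip_inj[OF assms])

lemma lift_assign:
  assumes "inj \<rho>" "\<forall>v. v \<notin> X \<longrightarrow> t v = s (\<rho> v)"
  shows "\<exists>t'. (\<forall>v. v \<notin> \<rho> ` X \<longrightarrow> t' v = s v) \<and> t' \<circ> \<rho> = t"
proof -
  define t' where "t' = (\<lambda>u. if u \<in> range \<rho> then t (inv \<rho> u) else s u)"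
  have "t' \<circ> \<rho> = t" using assms(1) by (auto simp: t'_def)
  moreover have "\<forall>v. v \<notin> \<rho> ` X \<longrightarrow> t' v = s v"
    using assms by (auto simp: t'_def)
  ultimately show ?thesis by blast
qed

lemma fml_rename:
  assumes "fml q F P" "inj \<rho>"
  shows "fml q (\<rho> ` F) (\<lambda>s. P (s \<circ> \<rho>))"
  using assms(1)
proof (induction rule: fml.induct)
  case (atom k R vs)
  show ?case
    by (rule fml_cong[OF fml.atom[OF atom(1), of "map \<rho> vs"]]) (auto simp: atom(2) comp_def)
next
  case (neg F P)
  then show ?case using fml.neg by blast
next
  case (conj S)
  let ?S = "(\<lambda>p. (\<rho> ` fst p, \<lambda>s. snd p (s \<circ> \<rho>))) ` S"
  have "\<forall>p\<in>?S. fml q (fst p) (snd p)" using conj by (fastforce simp: comp_def)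
  from fml.conj[OF this] show ?case
    by (rule fml_cong) (auto simp: comp_def)
next
  case (disj S)
  let ?S = "(\<lambda>p. (\<rho> ` fst p, \<lambda>s. snd p (s \<circ> \<rho>))) ` S"
  have "\<forall>p\<in>?S. fml q (fst p) (snd p)" using disj by (fastforce simp: comp_def)
  from fml.disj[OF this] show ?case
    by (rule fml_cong) (auto simp: comp_def)
next
  case (ex F P X)
  from fml.ex[OF ex(2), of "\<rho> ` X"] show ?case
  proof (rule fml_cong)
    show "\<rho> ` F - \<rho> ` X = \<rho> ` (F - X)" using assms(2) by (simp add: image_set_diff)
    show "(\<lambda>s. \<exists>t. (\<forall>v. v \<notin> \<rho> ` X \<longrightarrow> t v = s v) \<and> P (t \<circ> \<rho>)) =
      (\<lambda>s. \<exists>t. (\<forall>v. v \<notin> X \<longrightarrow> t v = (s \<circ> \<rho>) v) \<and> P t)"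
    proof (rule ext, rule iffI)
      fix s assume "\<exists>t. (\<forall>v. v \<notin> \<rho> ` X \<longrightarrow> t v = s v) \<and> P (t \<circ> \<rho>)"
      then obtain t where "\<forall>v. v \<notin> \<rho> ` X \<longrightarrow> t v = s v" "P (t \<circ> \<rho>)" by blast
      then show "\<exists>t. (\<forall>v. v \<notin> X \<longrightarrow> t v = (s \<circ> \<rho>) v) \<and> P t"
        using assms(2) by (intro exI[of _ "t \<circ> \<rho>"]) (auto simp: inj_image_mem_iff)
    next
      fix s assume "\<exists>t. (\<forall>v. v \<notin> X \<longrightarrow> t v = (s \<circ> \<rho>) v) \<and> P t"
      then obtain t where t: "\<forall>v. v \<notin> X \<longrightarrow> t v = s (\<rho> v)" "P t" by auto
      from lift_assign[OF assms(2) t(1)] obtain t' where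
        "\<forall>v. v \<notin> \<rho> ` X \<longrightarrow> t' v = s v" "t' \<circ> \<rho> = t" by blast
      then show "\<exists>t. (\<forall>v. v \<notin> \<rho> ` X \<longrightarrow> t v = s v) \<and> P (t \<circ> \<rho>)"
        using t(2) by blast
    qed
  qed
next
  case (all F P X)
  from fml.all[OF all(2), of "\<rho> ` X"] show ?case
  proof (rule fml_cong)
    show "\<rho> ` F - \<rho> ` X = \<rho> ` (F - X)" using assms(2) by (simp add: image_set_diff)
    show "(\<lambda>s. \<forall>t. (\<forall>v. v \<notin> \<rho> ` X \<longrightarrow> t v = s v) \<longrightarrow> P (t \<circ> \<rho>)) =
      (\<lambda>s. \<forall>t. (\<forall>v. v \<notin> X \<longrightarrow> t v = (s \<circ> \<rho>) v) \<longrightarrow> P t)"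
    proof (rule ext, rule iffI)
      fix s assume H: "\<forall>t. (\<forall>v. v \<notin> \<rho> ` X \<longrightarrow> t v = s v) \<longrightarrow> P (t \<circ> \<rho>)"
      show "\<forall>t. (\<forall>v. v \<notin> X \<longrightarrow> t v = (s \<circ> \<rho>) v) \<longrightarrow> P t"
      proof (intro allI impI)
        fix t assume "\<forall>v. v \<notin> X \<longrightarrow> t v = (s \<circ> \<rho>) v"
        then have "\<forall>v. v \<notin> X \<longrightarrow> t v = s (\<rho> v)" by simp
        from lift_assign[OF assms(2) this] obtain t' where
          "\<forall>v. v \<notin> \<rho> ` X \<longrightarrow> t' v = s v" "t' \<circ> \<rho> = t" by blast
        then show "P t" using H by blast
      qed
    next
      fix s assume H: "\<forall>t. (\<forall>v. v \<notin> X \<longrightarrow> t v = (s \<circ> \<rho>) v) \<longrightarrow> P t"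
      show "\<forall>t. (\<forall>v. v \<notin> \<rho> ` X \<longrightarrow> t v = s v) \<longrightarrow> P (t \<circ> \<rho>)"
        using H assms(2) by (auto simp: inj_image_mem_iff)
    qed
  qed
next
  case (gq ks Q xs phis)
  let ?xs = "map (map \<rho>) xs"
  let ?phis = "map (\<lambda>p. (\<rho> ` fst p, \<lambda>s. snd p (s \<circ> \<rho>))) phis"
  have c: "\<forall>i < length ks. distinct (?xs ! i) \<and> length (?xs ! i) = ks ! i \<and>
           fml q (fst (?phis ! i)) (snd (?phis ! i))"
    using gq assms(2) by (auto simp: distinct_map inj_on_def comp_def)
  from fml.gq[OF gq(1) _ _ c] gq(2,3) show ?case
  proof (rule_tac fml_cong)
    show "(\<Union>i<length ks. fst (?phis ! i) - set (?xs ! i)) =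
        \<rho> ` (\<Union>i<length ks. fst (phis ! i) - set (xs ! i))"
      using gq(2,3) assms(2) by (auto simp: image_UN image_set_diff)
    show "(\<lambda>s. map (\<lambda>i. {as. length as = ks ! i \<and> snd (?phis ! i) (upds s (?xs ! i) as)})
                  [0..<length ks] \<in> Q) =
      (\<lambda>s. map (\<lambda>i. {as. length as = ks ! i \<and> snd (phis ! i) (upds (s \<circ> \<rho>) (xs ! i) as)})
                  [0..<length ks] \<in> Q)"
      using gq(2,3) by (intro ext arg_cong[where f="\<lambda>l. l \<in> Q"] map_cong refl)
          (simp add: upds_inj[OF assms(2)])
  qed auto
qed

lemma fml_const:
  assumes "fml q F P" "\<forall>(k, R) \<in> rels q. k = 0"
  shows "F = {} \<and> (\<forall>s t. P s = P t)"
  using assms(1)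
proof (induction rule: fml.induct)
  case (atom k R vs)
  then show ?case using assms(2) by auto
next
  case (neg F P) then show ?case by auto
next
  case (conj S) then show ?case by auto (metis snd_conv)+
next
  case (disj S) then show ?case by auto (metis snd_conv)+
next
  case (ex F P X)
  then show ?case by auto
next
  case (all F P X)
  then show ?case by auto
next
  case (gq ks Q xs phis)
  have m: "map (\<lambda>i. {as. length as = ks ! i \<and> snd (phis ! i) (upds s (xs ! i) as)})
                  [0..<length ks] = map (\<lambda>i. {as. length as = ks ! i \<and> snd (phis ! i) (upds t (xs ! i) as)})
                  [0..<length ks]" for s t
    using gq by (intro map_cong refl) auto
  show ?case
  proof (intro conjI allI)
    show "(\<Union>i<length ks. fst (phis ! i) - set (xs ! i)) = {}" using gq by auto
    fix s t
    show "(map (\<lambda>i. {as. length as = ks ! i \<and> snd (phis ! i) (upds s (xs ! i) as)})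
                  [0..<length ks] \<in> Q) = (map (\<lambda>i. {as. length as = ks ! i \<and> snd (phis ! i) (upds t (xs ! i) as)})
                  [0..<length ks] \<in> Q)"
      by (simp only: m[of s t])
  qed
qed

theorem lemma11:
  fixes q :: "'a ops" and a b :: 'a
  assumes "wf_ops q"
    and "infinite (UNIV :: 'v set)"
  shows "sim_q q TYPE('v) a b \<longleftrightarrow>
    (\<forall>(F :: 'v set) P x y c s. fml q F P \<longrightarrow> x \<noteq> y \<longrightarrow> F = {x, y} \<longrightarrow>
        (P (s(x := a, y := c)) \<longleftrightarrow> P (s(x := b, y := c))))"
proof
  assume H: "sim_q q TYPE('v) a b"
  show "\<forall>(F :: 'v set) P x y c s. fml q F P \<longrightarrow> x \<noteq> y \<longrightarrow> F = {x, y} \<longrightarrow>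
        (P (s(x := a, y := c)) \<longleftrightarrow> P (s(x := b, y := c)))"
  proof (intro allI impI)
    fix F :: "'v set" and P and x y :: 'v and c s
    assume "fml q F P" "x \<noteq> y"
    then have "P ((s(y := c))(x := a)) \<longleftrightarrow> P ((s(y := c))(x := b))"
      using H unfolding sim_q_def by blast
    then show "P (s(x := a, y := c)) \<longleftrightarrow> P (s(x := b, y := c))"
      using \<open>x \<noteq> y\<close> by (simp add: fun_upd_twist)
  qed
next
  assume R: "\<forall>(F :: 'v set) P x y c s. fml q F P \<longrightarrow> x \<noteq> y \<longrightarrow> F = {x, y} \<longrightarrow>
        (P (s(x := a, y := c)) \<longleftrightarrow> P (s(x := b, y := c)))"
  show "sim_q q TYPE('v) a b"
    unfolding sim_q_def
  proof (intro allI impI)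
    fix F :: "'v set" and P w s
    assume fP: "fml q F P"
    show "P (s(w := a)) \<longleftrightarrow> P (s(w := b))"
    proof (cases "\<forall>(k, R) \<in> rels q. k = 0")
      case True
      from fml_const[OF fP True] show ?thesis by blast
    next
      case False
      then obtain k R where kR: "(k, R) \<in> rels q" "k > 0" by auto
      obtain x :: 'v where True by blast
      have "infinite (UNIV - {x})" using assms(2) by simp
      then obtain y where "y \<in> UNIV - {x}" using infinite_imp_nonempty by blast
      then have xy: "x \<noteq> y" by auto
      obtain h1 :: "'v \<Rightarrow> 'v" where h1: "bij_betw h1 UNIV (UNIV - {x})"
        using infinite_imp_bij_betw[OF assms(2)] by blast
      obtain h2 :: "'v \<Rightarrow> 'v" where h2: "bij_betw h2 (UNIV - {x}) (UNIV - {x} - {y})"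
        using infinite_imp_bij_betw[OF \<open>infinite (UNIV - {x})\<close>] by blast
      define \<sigma> where "\<sigma> = h2 \<circ> h1"
      have sb: "bij_betw \<sigma> UNIV (UNIV - {x} - {y})"
        unfolding \<sigma>_def using h1 h2 by (rule bij_betw_trans)
      then have inj\<sigma>: "inj \<sigma>" and \<sigma>x: "\<And>v. \<sigma> v \<noteq> x" and \<sigma>y: "\<And>v. \<sigma> v \<noteq> y"
        by (auto simp: bij_betw_def)
      define \<rho>1 where "\<rho>1 = \<sigma>(w := x)"
      define \<rho>2 where "\<rho>2 = \<sigma>(w := y)"
      have i1: "inj \<rho>1" unfolding \<rho>1_def using inj\<sigma> \<sigma>x
        by (auto simp: inj_def)
      have i2: "inj \<rho>2" unfolding \<rho>2_def using inj\<sigma> \<sigma>y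
        by (auto simp: inj_def)
      define P1 where "P1 = (\<lambda>t. P (t \<circ> \<rho>1))"
      define P2 where "P2 = (\<lambda>t. P (t \<circ> \<rho>2))"
      have f1: "fml q (\<rho>1 ` F) P1" unfolding P1_def by (rule fml_rename[OF fP i1])
      have f2: "fml q (\<rho>2 ` F) P2" unfolding P2_def by (rule fml_rename[OF fP i2])
      define G where "G = \<rho>1 ` F \<union> \<rho>2 ` F"
      have c1: "fml q G (\<lambda>t. P1 t \<and> P2 t)"
        using fml.conj[of "{(\<rho>1 ` F, P1), (\<rho>2 ` F, P2)}"] f1 f2 unfolding G_def
        by (rule_tac fml_cong) auto
      have c2: "fml q G (\<lambda>t. \<not> P1 t \<and> \<not> P2 t)"
        using fml.conj[of "{(\<rho>1 ` F, \<lambda>t. \<not> P1 t), (\<rho>2 ` F, \<lambda>t. \<not> P2 t)}"]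
          fml.neg[OF f1] fml.neg[OF f2] unfolding G_def
        by (rule_tac fml_cong) auto
      have c3': "fml q G (\<lambda>t. P1 t \<and> P2 t \<or> \<not> P1 t \<and> \<not> P2 t)"
        using fml.disj[of "{(G, \<lambda>t. P1 t \<and> P2 t), (G, \<lambda>t. \<not> P1 t \<and> \<not> P2 t)}" q] c1 c2
        by (rule_tac fml_cong) auto
      have c3: "fml q G (\<lambda>t. P1 t \<longleftrightarrow> P2 t)"
        using c3' by (rule fml_cong) (auto simp: fun_eq_iff)
      define X where "X = - {x, y}"
      define \<Theta> where "\<Theta> = (\<lambda>s. \<forall>t. (\<forall>v. v \<notin> X \<longrightarrow> t v = s v) \<longrightarrow> (P1 t \<longleftrightarrow> P2 t))"
      have c4: "fml q (G - X) \<Theta>" unfolding \<Theta>_def by (rule fml.all[OF c3])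
      have GX: "G - X \<subseteq> {x, y}" unfolding X_def by auto
      have dx: "fml q {z} (\<lambda>s. True)" for z
      proof -
        have a: "fml q {z} (\<lambda>s. map s (replicate k z) \<in> R)"
          using fml.atom[OF kR(1), of "replicate k z"] kR(2) by simp
        show ?thesis
          using fml.disj[of "{({z}, \<lambda>s. map s (replicate k z) \<in> R),
                              ({z}, \<lambda>s. \<not> map s (replicate k z) \<in> R)}"] a fml.neg[OF a]
          by (rule_tac fml_cong) auto
      qed
      have c5': "fml q (insert y (insert x (G - X))) \<Theta>"
        using fml.conj[of "{(G - X, \<Theta>), ({x}, \<lambda>s. True), ({y}, \<lambda>s. True)}" q] c4 dx[of x] dx[of y]
        by (rule_tac fml_cong) auto
      have c5: "fml q {x, y} \<Theta>"
        using c5' by (rule fml_cong) (use GX in auto)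
      have "\<Theta> (s(x := a, y := a))"
        unfolding \<Theta>_def
      proof (intro allI impI)
        fix t assume "\<forall>v. v \<notin> X \<longrightarrow> t v = (s(x := a, y := a)) v"
        then have "t x = a" "t y = a" unfolding X_def by auto
        then have "t \<circ> \<rho>1 = t \<circ> \<rho>2" unfolding \<rho>1_def \<rho>2_def by (auto simp: fun_eq_iff)
        then show "P1 t \<longleftrightarrow> P2 t" unfolding P1_def P2_def by simp
      qed
      moreover from R[rule_format, OF c5 xy refl]
      have "\<Theta> (s(x := a, y := a)) \<longleftrightarrow> \<Theta> (s(x := b, y := a))" .
      ultimately have T: "\<Theta> (s(x := b, y := a))" by blast
      define t where "t = (\<lambda>v. if v = x then b else if v = y then a else s (inv \<sigma> v))"
      have "\<forall>v. v \<notin> X \<longrightarrow> t v = (s(x := b, y := a)) v" unfolding X_def t_def using xy by auto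
      then have "P1 t \<longleftrightarrow> P2 t" using T unfolding \<Theta>_def by blast
      moreover have "t \<circ> \<rho>1 = s(w := b)" unfolding t_def \<rho>1_def
        using \<sigma>x \<sigma>y inj\<sigma> by (auto simp: fun_eq_iff inv_f_f)
      moreover have "t \<circ> \<rho>2 = s(w := a)" unfolding t_def \<rho>2_def
        using \<sigma>x \<sigma>y inj\<sigma> xy by (auto simp: fun_eq_iff inv_f_f)
      ultimately show ?thesis unfolding P1_def P2_def by simp
    qed
  qed
qed

end
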